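(* Let $G$ be a $2$-connected graph with average degree less than $3$ and with at least two vertices of degree $2$. Then $G$ contains an induced subgraph $T$ which is a tree such that every vertex of $T$ has exactly one neighbor in $V(G)\setminus V(T)$.
   Context: All graphs are finite and simple. *)

theory Defs
  imports Complex_Main
begin

definition simple_graph :: "'a set \<Rightarrow> ('a \<Rightarrow> 'a \<Rightarrow> bool) \<Rightarrow> bool" where
  "simple_graph V E \<longleftrightarrow> finite V \<and> (\<forall>u v. E u v \<longrightarrow> u \<in> V \<and> v \<in> V)
     \<and> (\<forall>u v. E u v \<longrightarrow> E v u) \<and> (\<forall>v. \<not> E v v)"

definition degree :: "'a set \<Rightarrow> ('a \<Rightarrow> 'a \<Rightarrow> bool) \<Rightarrow> 'a \<Rightarrow> nat" where
  "degree V E v = card {w \<in> V. E v w}"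

definition num_edges :: "'a set \<Rightarrow> ('a \<Rightarrow> 'a \<Rightarrow> bool) \<Rightarrow> nat" where
  "num_edges V E = card {{u, v} | u v. u \<in> V \<and> v \<in> V \<and> E u v}"

definition avg_degree :: "'a set \<Rightarrow> ('a \<Rightarrow> 'a \<Rightarrow> bool) \<Rightarrow> real" where
  "avg_degree V E = 2 * real (num_edges V E) / real (card V)"

definition connected_on :: "('a \<Rightarrow> 'a \<Rightarrow> bool) \<Rightarrow> 'a set \<Rightarrow> bool" where
  "connected_on E S \<longleftrightarrow> S \<noteq> {} \<and>
     (\<forall>u \<in> S. \<forall>v \<in> S. (\<lambda>x y. x \<in> S \<and> y \<in> S \<and> E x y)\<^sup>*\<^sup>* u v)"

definition k_connected :: "nat \<Rightarrow> 'a set \<Rightarrow> ('a \<Rightarrow> 'a \<Rightarrow> bool) \<Rightarrow> bool" where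
  "k_connected k V E \<longleftrightarrow> card V > k \<and>
     (\<forall>X. X \<subseteq> V \<and> card X < k \<longrightarrow> connected_on E (V - X))"

definition has_cycle_on :: "('a \<Rightarrow> 'a \<Rightarrow> bool) \<Rightarrow> 'a set \<Rightarrow> bool" where
  "has_cycle_on E S \<longleftrightarrow> (\<exists>cs. length cs \<ge> 3 \<and> distinct cs \<and> set cs \<subseteq> S
     \<and> (\<forall>i. Suc i < length cs \<longrightarrow> E (cs ! i) (cs ! Suc i))
     \<and> E (last cs) (hd cs))"

definition induced_tree :: "('a \<Rightarrow> 'a \<Rightarrow> bool) \<Rightarrow> 'a set \<Rightarrow> bool" where
  "induced_tree E S \<longleftrightarrow> connected_on E S \<and> \<not> has_cycle_on E S"

end

theory Submission
  imports Defs
begin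


definition rch :: "('a \<Rightarrow> 'a \<Rightarrow> bool) \<Rightarrow> 'a set \<Rightarrow> 'a \<Rightarrow> 'a \<Rightarrow> bool" where
  "rch F S = (\<lambda>x y. x \<in> S \<and> y \<in> S \<and> F x y)\<^sup>*\<^sup>*"

lemma conn_def2: "connected_on F S \<longleftrightarrow> S \<noteq> {} \<and> (\<forall>u\<in>S. \<forall>v\<in>S. rch F S u v)"
  by (simp add: connected_on_def rch_def)

lemma rch_refl: "rch F S x x" by (simp add: rch_def)
lemma rch_step: "x \<in> S \<Longrightarrow> y \<in> S \<Longrightarrow> F x y \<Longrightarrow> rch F S x y"
  by (simp add: rch_def r_into_rtranclp)
lemma rch_trans: "rch F S x y \<Longrightarrow> rch F S y z \<Longrightarrow> rch F S x z"
  unfolding rch_def by (rule rtranclp_trans)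

lemma rch_mono: "S \<subseteq> S' \<Longrightarrow> rch F S x y \<Longrightarrow> rch F S' x y"
  unfolding rch_def by (erule rtranclp_mono[THEN predicate2D, rotated]) auto

lemma rch_sym: assumes "\<And>x y. F x y \<Longrightarrow> F y x" "rch F S x y" shows "rch F S y x"
  using assms(2) unfolding rch_def
proof (induction rule: rtranclp_induct)
  case base then show ?case by simp
next
  case (step y z)
  then have "(\<lambda>x y. x \<in> S \<and> y \<in> S \<and> F x y) z y" using assms(1) by auto
  from converse_rtranclp_into_rtranclp[OF this step.IH] show ?case .
qed

lemma rch_in: "rch F S x y \<Longrightarrow> x \<in> S \<Longrightarrow> y \<in> S"
  unfolding rch_def by (induction rule: rtranclp_induct) auto

lemma rch_in2: "rch F S x y \<Longrightarrow> x \<noteq> y \<Longrightarrow> x \<in> S"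
  unfolding rch_def by (induction rule: converse_rtranclp_induct) auto

lemma conn_single: "connected_on F {v}"
  by (simp add: conn_def2 rch_refl)


lemma conn_Un: assumes sym: "\<And>x y. F x y \<Longrightarrow> F y x"
  and "connected_on F A" "connected_on F B" "A \<inter> B \<noteq> {}"
  shows "connected_on F (A \<union> B)"
proof -
  obtain c where c: "c \<in> A" "c \<in> B" using assms(4) by blast
  have A: "\<And>u v. u \<in> A \<Longrightarrow> v \<in> A \<Longrightarrow> rch F (A \<union> B) u v"
    using assms(2) rch_mono[of A "A \<union> B" F] by (auto simp: conn_def2)
  have B: "\<And>u v. u \<in> B \<Longrightarrow> v \<in> B \<Longrightarrow> rch F (A \<union> B) u v"
    using assms(3) rch_mono[of B "A \<union> B" F] by (auto simp: conn_def2)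
  show ?thesis unfolding conn_def2
  proof (intro conjI ballI)
    show "A \<union> B \<noteq> {}" using c by blast
    fix u v assume "u \<in> A \<union> B" "v \<in> A \<union> B"
    have uc: "rch F (A \<union> B) u c" using \<open>u \<in> A \<union> B\<close> A B c by blast
    have cv: "rch F (A \<union> B) c v" using \<open>v \<in> A \<union> B\<close> A B c by blast
    show "rch F (A \<union> B) u v" using rch_trans[OF uc cv] .
  qed
qed

lemma conn_insert: assumes sym: "\<And>x y. F x y \<Longrightarrow> F y x"
  and "connected_on F A" "u \<in> A" "F u v"
  shows "connected_on F (insert v A)"
proof -
  have "connected_on F {u, v}" unfolding conn_def2
  proof (intro conjI ballI)
    fix x y assume "x \<in> {u,v}" "y \<in> {u,v}"
    moreover have "rch F {u,v} u v" by (rule rch_step) (use assms in auto)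
    moreover have "rch F {u,v} v u" by (rule rch_step) (use assms in auto)
    ultimately show "rch F {u, v} x y" using rch_refl by auto
  qed simp
  then have "connected_on F (A \<union> {u,v})" using conn_Un[OF sym assms(2)] assms(3) by blast
  moreover have "A \<union> {u,v} = insert v A" using assms(3) by auto
  ultimately show ?thesis by simp
qed


lemma exit_edge: assumes "connected_on F S" "X \<subseteq> S" "x \<in> X" "s \<in> S" "s \<notin> X"
  shows "\<exists>u\<in>X. \<exists>v\<in>S - X. F u v"
proof -
  have r: "rch F S x s" using assms by (auto simp: conn_def2)
  have "\<And>y. rch F S x y \<Longrightarrow> y \<in> X \<or> (\<exists>u\<in>X. \<exists>v\<in>S - X. F u v)"
  proof -
    fix y assume "rch F S x y"
    then show "y \<in> X \<or> (\<exists>u\<in>X. \<exists>v\<in>S - X. F u v)" unfolding rch_def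
    proof (induction rule: rtranclp_induct)
      case base then show ?case using assms by simp
    next
      case (step y z) then show ?case by blast
    qed
  qed
  from this[OF r] assms(5) show ?thesis by blast
qed


lemma conn_bridge: assumes sym: "\<And>x y. F x y \<Longrightarrow> F y x"
  and W: "connected_on F W" and BW: "B \<subseteq> W" and b: "b \<in> B"
  and only: "\<And>y x. y \<in> B \<Longrightarrow> x \<in> W - B \<Longrightarrow> F y x \<Longrightarrow> y = b"
  shows "connected_on F B"
proof -
  have key: "rch F B x b" if xB: "x \<in> B" for x
  proof -
    have r: "rch F W x b" using W xB b BW by (auto simp: conn_def2)
    have "(y \<in> B \<and> rch F B x y) \<or> rch F B x b" if "rch F W x y" for y
      using that unfolding rch_def[of F W]
    proof (induction rule: rtranclp_induct)
      case base then show ?case using xB by (simp add: rch_refl)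
    next
      case (step y z)
      have yz: "y \<in> W" "z \<in> W" "F y z" using step.hyps(2) by auto
      from step.IH show ?case
      proof
        assume a: "y \<in> B \<and> rch F B x y"
        show ?thesis
        proof (cases "z \<in> B")
          case True
          then have "rch F B y z" using a yz rch_step by metis
          then show ?thesis using a True rch_trans by metis
        next
          case False
          then have "z \<in> W - B" using yz by simp
          then have "y = b" using only a yz by metis
          then show ?thesis using a by simp
        qed
      next
        assume "rch F B x b" then show ?thesis by simp
      qed
    qed
    then show ?thesis using r by blast
  qed
  show ?thesis unfolding conn_def2
  proof (intro conjI ballI)
    show "B \<noteq> {}" using b by blast
    fix u v assume "u \<in> B" "v \<in> B"
    have "rch F B u b" using key \<open>u \<in> B\<close> by blast
    moreover have "rch F B b v" using rch_sym[OF sym key[OF \<open>v \<in> B\<close>]] .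
    ultimately show "rch F B u v" by (rule rch_trans)
  qed
qed

definition cmp :: "('a \<Rightarrow> 'a \<Rightarrow> bool) \<Rightarrow> 'a set \<Rightarrow> 'a \<Rightarrow> 'a set" where
  "cmp F R x = {y. rch F R x y}"

lemma cmp_self: "x \<in> cmp F R x" by (simp add: cmp_def rch_refl)
lemma cmp_sub: "x \<in> R \<Longrightarrow> cmp F R x \<subseteq> R" using rch_in by (auto simp: cmp_def)
lemma cmp_closed: assumes "y \<in> cmp F R x" "z \<in> R" "y \<in> R" "F y z" shows "z \<in> cmp F R x"
proof -
  have "rch F R x y" using assms(1) by (simp add: cmp_def)
  moreover have "rch F R y z" using assms by (intro rch_step)
  ultimately show ?thesis unfolding cmp_def using rch_trans by fastforce
qed

lemma cmp_same: assumes sym: "\<And>x y. F x y \<Longrightarrow> F y x" and "y \<in> cmp F R x"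
  shows "cmp F R y = cmp F R x"
proof -
  have xy: "rch F R x y" using assms(2) by (simp add: cmp_def)
  have yx: "rch F R y x" using rch_sym[OF sym xy] .
  show ?thesis
  proof
    show "cmp F R y \<subseteq> cmp F R x" unfolding cmp_def using rch_trans[OF xy] by blast
    show "cmp F R x \<subseteq> cmp F R y" unfolding cmp_def using rch_trans[OF yx] by blast
  qed
qed

lemma cmp_conn: assumes sym: "\<And>x y. F x y \<Longrightarrow> F y x" and xR: "x \<in> R"
  shows "connected_on F (cmp F R x)"
proof -
  have inner: "rch F (cmp F R x) y z" if "rch F R y z" "y \<in> cmp F R x" for y z
    using that unfolding rch_def[of F R]
  proof (induction rule: rtranclp_induct)
    case base then show ?case by (simp add: rch_refl)
  next
    case (step z w)
    have zw: "z \<in> R" "w \<in> R" "F z w" using step.hyps(2) by auto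
    have "rch F R y z" using step.hyps(1) by (simp add: rch_def)
    then have "rch F R x z" using step.prems rch_trans by (fastforce simp: cmp_def)
    then have zc: "z \<in> cmp F R x" by (simp add: cmp_def)
    have wc: "w \<in> cmp F R x" using cmp_closed[OF zc zw(2) zw(1) zw(3)] .
    have "rch F (cmp F R x) z w" using zc wc zw(3) by (rule rch_step)
    from rch_trans[OF step.IH[OF step.prems] this] show ?case .
  qed
  show ?thesis unfolding conn_def2
  proof (intro conjI ballI)
    show "cmp F R x \<noteq> {}" using cmp_self[of x F R] by blast
    fix u v assume u: "u \<in> cmp F R x" and v: "v \<in> cmp F R x"
    have xu: "rch F R x u" and xv: "rch F R x v" using u v by (auto simp: cmp_def)
    have "rch F R u v" using rch_trans[OF rch_sym[OF sym xu] xv] .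
    from inner[OF this u] show "rch F (cmp F R x) u v" .
  qed
qed

definition prsF :: "('a \<Rightarrow> 'a \<Rightarrow> bool) \<Rightarrow> 'a set \<Rightarrow> ('a \<times> 'a) set" where
  "prsF F S = {(x,y). x \<in> S \<and> y \<in> S \<and> F x y}"

lemma min_edges: assumes sym: "\<And>x y. F x y \<Longrightarrow> F y x" and fin: "finite S"
  and conn: "connected_on F S"
  shows "card (prsF F S) \<ge> 2 * (card S - 1)"
proof -
  obtain x0 where x0: "x0 \<in> S" using conn by (auto simp: conn_def2)
  let ?P = "\<lambda>X. X \<subseteq> S \<and> x0 \<in> X \<and> card (prsF F X) \<ge> 2 * (card X - 1)"
  have P0: "?P {x0}" using x0 by simp
  have bnd: "\<forall>X. ?P X \<longrightarrow> card X < Suc (card S)" using fin by (auto simp: card_mono le_imp_less_Suc)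
  obtain X where PX: "?P X" and mx: "\<forall>Y. ?P Y \<longrightarrow> card Y \<le> card X"
    using Lattices_Big.ex_has_greatest_nat[of ?P "{x0}" card, OF P0 bnd] by blast
  have "X = S"
  proof (rule ccontr)
    assume "X \<noteq> S"
    then obtain s where s: "s \<in> S" "s \<notin> X" using PX by blast
    obtain u v where uv: "u \<in> X" "v \<in> S - X" "F u v" using exit_edge[OF conn _ _ s] PX by blast
    let ?Y = "insert v X"
    have finX: "finite X" using PX fin finite_subset by blast
    have finS2: "finite (S \<times> S)" using fin by simp
    have sub: "prsF F X \<subseteq> prsF F ?Y" by (auto simp: prsF_def)
    have new: "(u,v) \<in> prsF F ?Y - prsF F X" "(v,u) \<in> prsF F ?Y - prsF F X"
      using uv sym by (auto simp: prsF_def)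
    have "prsF F X \<union> {(u,v),(v,u)} \<subseteq> prsF F ?Y" using sub new by blast
    moreover have "finite (prsF F ?Y)"
      by (rule finite_subset[OF _ finS2]) (use PX uv in \<open>auto simp: prsF_def\<close>)
    ultimately have "card (prsF F X \<union> {(u,v),(v,u)}) \<le> card (prsF F ?Y)" by (rule card_mono[rotated])
    moreover have "card (prsF F X \<union> {(u,v),(v,u)}) = card (prsF F X) + 2"
    proof -
      have "finite (prsF F X)" by (rule finite_subset[OF _ finS2]) (use PX in \<open>auto simp: prsF_def\<close>)
      moreover have "u \<noteq> v" using uv by blast
      ultimately show ?thesis using new by (subst card_Un_disjoint) auto
    qed
    ultimately have "card (prsF F ?Y) \<ge> card (prsF F X) + 2" by simp
    moreover have "card ?Y = card X + 1" using uv finX by simp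
    moreover have "card X \<ge> 1" using PX finX by (metis One_nat_def Suc_leI card_gt_0_iff empty_iff)
    ultimately have "?P ?Y" using PX uv by auto
    then have "card ?Y \<le> card X" using mx by blast
    then show False using \<open>card ?Y = card X + 1\<close> by simp
  qed
  then show ?thesis using PX by simp
qed


lemma tree_nocycle: assumes sym: "\<And>x y. F x y \<Longrightarrow> F y x" and fin: "finite T"
  and conn: "connected_on F T" and cnt: "card (prsF F T) = 2 * (card T - 1)"
  and cyc: "has_cycle_on F T"
  shows False
proof -
  obtain cs where len: "length cs \<ge> 3" and dis: "distinct cs" and setT: "set cs \<subseteq> T"
    and cons: "\<And>i. Suc i < length cs \<Longrightarrow> F (cs ! i) (cs ! Suc i)" and lh: "F (last cs) (hd cs)"
    using cyc by (auto simp: has_cycle_on_def)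
  define x where "x = last cs"
  define y where "y = hd cs"
  have ne: "cs \<noteq> []" using len by auto
  have x_nth: "x = cs ! (length cs - 1)" using ne by (simp add: x_def last_conv_nth)
  have y_nth: "y = cs ! 0" using ne by (simp add: y_def hd_conv_nth)
  have xy: "x \<noteq> y"
  proof
    assume "x = y"
    then have "cs ! (length cs - 1) = cs ! 0" using x_nth y_nth by simp
    then have "length cs - 1 = 0" using dis len by (subst (asm) nth_eq_iff_index_eq) auto
    then show False using len by simp
  qed
  have xT: "x \<in> T" and yT: "y \<in> T" using setT ne x_nth y_nth len by (auto simp: nth_mem subsetD)
  define F' where "F' = (\<lambda>u v. F u v \<and> \<not> ((u = x \<and> v = y) \<or> (u = y \<and> v = x)))"
  have sym': "\<And>u v. F' u v \<Longrightarrow> F' v u" using sym by (auto simp: F'_def)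
  have path: "rch F' T y (cs ! i)" if "i < length cs" for i
    using that
  proof (induction i)
    case 0 then show ?case using y_nth by (simp add: rch_refl)
  next
    case (Suc i)
    have il: "i < length cs" using Suc.prems by simp
    have Fi: "F (cs ! i) (cs ! Suc i)" using cons Suc.prems by blast
    have lt: "length cs - 1 < length cs" using ne by simp
    have ni: "cs ! i \<noteq> x"
    proof
      assume "cs ! i = x"
      then have "cs ! i = cs ! (length cs - 1)" using x_nth by simp
      then have "i = length cs - 1" using nth_eq_iff_index_eq[OF dis il lt] by simp
      then show False using Suc.prems by simp
    qed
    have nsi: "\<not> (cs ! i = y \<and> cs ! Suc i = x)"
    proof
      assume a: "cs ! i = y \<and> cs ! Suc i = x"
      then have "cs ! Suc i = cs ! (length cs - 1)" using x_nth by simp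
      then have "Suc i = length cs - 1" using nth_eq_iff_index_eq[OF dis Suc.prems lt] by simp
      moreover have "cs ! i = cs ! 0" using a y_nth by simp
      then have "i = 0" using nth_eq_iff_index_eq[OF dis il, of 0] ne by simp
      ultimately show False using len by simp
    qed
    have F'i: "F' (cs ! i) (cs ! Suc i)" using Fi ni nsi by (simp add: F'_def)
    have inT: "cs ! i \<in> T" "cs ! Suc i \<in> T" using setT il Suc.prems nth_mem by blast+
    have st: "rch F' T (cs ! i) (cs ! Suc i)" using inT F'i by (intro rch_step)
    have ih: "rch F' T y (cs ! i)" using Suc.IH il by simp
    show ?case using rch_trans[OF ih st] .
  qed
  have yx: "rch F' T y x" using path[of "length cs - 1"] x_nth ne by simp
  have xy': "rch F' T x y" using rch_sym[OF sym' yx] .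
  have conv: "rch F' T u v" if "rch F T u v" for u v
    using that unfolding rch_def[of F T]
  proof (induction rule: rtranclp_induct)
    case base then show ?case by (simp add: rch_refl)
  next
    case (step p q)
    have pq: "p \<in> T" "q \<in> T" "F p q" using step.hyps(2) by auto
    have "rch F' T p q"
    proof (cases "F' p q")
      case True then show ?thesis using pq by (intro rch_step)
    next
      case False
      then have "(p = x \<and> q = y) \<or> (p = y \<and> q = x)" using pq by (auto simp: F'_def)
      then show ?thesis using yx xy' by auto
    qed
    from rch_trans[OF step.IH this] show ?case .
  qed
  have conn': "connected_on F' T" using conn conv by (auto simp: conn_def2)
  have me: "card (prsF F' T) \<ge> 2 * (card T - 1)" using min_edges[OF sym' fin conn'] .
  have eq: "prsF F T = prsF F' T \<union> {(x,y),(y,x)}"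
    using xT yT lh sym by (auto simp: prsF_def F'_def x_def y_def)
  have finp: "finite (prsF F' T)" by (rule finite_subset[of _ "T \<times> T"]) (use fin in \<open>auto simp: prsF_def\<close>)
  have "card (prsF F T) = card (prsF F' T) + 2"
    unfolding eq using finp xy by (subst card_Un_disjoint) (auto simp: prsF_def F'_def)
  moreover have "card T \<ge> 1" using xT fin by (metis One_nat_def Suc_leI card_gt_0_iff empty_iff)
  ultimately show False using me cnt by linarith
qed




locale sg =
  fixes V :: "'a set" and E :: "'a \<Rightarrow> 'a \<Rightarrow> bool"
  assumes sg: "simple_graph V E"
begin

lemma finV: "finite V" using sg by (simp add: simple_graph_def)
lemma EV: "E u v \<Longrightarrow> u \<in> V \<and> v \<in> V" using sg by (simp add: simple_graph_def)
lemma Esym: "E u v \<Longrightarrow> E v u" using sg by (simp add: simple_graph_def)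
lemma Eirr: "\<not> E v v" using sg by (simp add: simple_graph_def)

definition nb :: "'a set \<Rightarrow> 'a \<Rightarrow> 'a set" where "nb W v = {u \<in> W. E v u}"
definition dg :: "'a set \<Rightarrow> 'a \<Rightarrow> nat" where "dg W v = card (nb W v)"
definition prs :: "'a set \<Rightarrow> 'a set \<Rightarrow> ('a \<times> 'a) set" where
  "prs A B = {(x,y). x \<in> A \<and> y \<in> B \<and> E x y}"
definition ind :: "'a set \<Rightarrow> 'a \<Rightarrow> int" where "ind Z v = (if v \<in> Z then 1 else 0)"
definition phi :: "'a set \<Rightarrow> 'a set \<Rightarrow> 'a set \<Rightarrow> int" where
  "phi W Z A = (\<Sum>v\<in>A. 3 - int (dg W v) - ind Z v)"
definition good :: "'a set \<Rightarrow> 'a set \<Rightarrow> 'a set \<Rightarrow> bool" where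
  "good W Z T \<longleftrightarrow> T \<subseteq> W \<and> connected_on E T \<and> card (prs T T) = 2 * (card T - 1) \<and>
     (\<forall>v\<in>T. ind Z v + int (card (nb (W - T) v)) = 1)"
definition inst :: "'a set \<Rightarrow> 'a set \<Rightarrow> bool" where
  "inst W Z \<longleftrightarrow> W \<subseteq> V \<and> connected_on E W \<and> (card W = 1 \<longrightarrow> W \<subseteq> Z)"

lemma fin_sub: "W \<subseteq> V \<Longrightarrow> finite W" using finV finite_subset by blast

lemma nb_sub: "nb W v \<subseteq> W" by (auto simp: nb_def)
lemma fin_nb: "W \<subseteq> V \<Longrightarrow> finite (nb W v)" using fin_sub nb_sub finite_subset by metis

lemma prs_fin: "A \<subseteq> V \<Longrightarrow> B \<subseteq> V \<Longrightarrow> finite (prs A B)"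
proof -
  assume "A \<subseteq> V" "B \<subseteq> V"
  then have "prs A B \<subseteq> A \<times> B" by (auto simp: prs_def)
  moreover have "finite (A \<times> B)" using \<open>A \<subseteq> V\<close> \<open>B \<subseteq> V\<close> fin_sub by blast
  ultimately show ?thesis using finite_subset by blast
qed

lemma card_prs_sum: assumes "A \<subseteq> V" "B \<subseteq> V"
  shows "card (prs A B) = (\<Sum>x\<in>A. card (nb B x))"
proof -
  have "prs A B = (\<Union>x\<in>A. (\<lambda>y. (x,y)) ` nb B x)" by (auto simp: prs_def nb_def)
  moreover have "card (\<Union>x\<in>A. (\<lambda>y. (x,y)) ` nb B x) = (\<Sum>x\<in>A. card ((\<lambda>y. (x,y)) ` nb B x))"
    apply (rule card_UN_disjoint)
    using assms fin_sub fin_nb by auto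
  moreover have "\<And>x. card ((\<lambda>y. (x,y)) ` nb B x) = card (nb B x)"
    by (rule card_image) (auto simp: inj_on_def)
  ultimately show ?thesis by simp
qed

lemma card_prs_swap: assumes "A \<subseteq> V" "B \<subseteq> V" shows "card (prs A B) = card (prs B A)"
proof -
  have "prs B A = (\<lambda>(x,y). (y,x)) ` prs A B" by (auto simp: prs_def image_iff intro: Esym)
  moreover have "inj_on (\<lambda>(x,y). (y,x)) (prs A B)" by (auto simp: inj_on_def)
  ultimately show ?thesis by (simp add: card_image)
qed

lemma prs_Un2: "prs A (B \<union> C) = prs A B \<union> prs A C" by (auto simp: prs_def)
lemma prs_Un1: "prs (B \<union> C) A = prs B A \<union> prs C A" by (auto simp: prs_def)

lemma card_prs_Un2: assumes "A \<subseteq> V" "B \<subseteq> V" "C \<subseteq> V" "B \<inter> C = {}"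
  shows "card (prs A (B \<union> C)) = card (prs A B) + card (prs A C)"
  unfolding prs_Un2 apply (rule card_Un_disjoint) using assms prs_fin by (auto simp: prs_def)

lemma sum_dg: assumes "A \<subseteq> V" "W \<subseteq> V" shows "(\<Sum>v\<in>A. dg W v) = card (prs A W)"
  using card_prs_sum[OF assms] by (simp add: dg_def)

lemma sum_ind: assumes "finite A" shows "(\<Sum>v\<in>A. ind Z v) = int (card (A \<inter> Z))"
proof -
  have "(\<Sum>v\<in>A. ind Z v) = (\<Sum>v\<in>A. if v \<in> Z then 1 else 0)" by (simp add: ind_def)
  also have "\<dots> = int (card (A \<inter> Z))" using assms by (simp add: sum.If_cases)
  finally show ?thesis .
qed

lemma phi_eq: assumes "A \<subseteq> V" "W \<subseteq> V"
  shows "phi W Z A = 3 * int (card A) - int (card (prs A W)) - int (card (A \<inter> Z))"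
proof -
  have fA: "finite A" using assms fin_sub by blast
  have "phi W Z A = (\<Sum>v\<in>A. 3) - (\<Sum>v\<in>A. int (dg W v)) - (\<Sum>v\<in>A. ind Z v)"
    by (simp add: phi_def sum_subtractf)
  also have "(\<Sum>v\<in>A. int (dg W v)) = int (card (prs A W))"
    using sum_dg[OF assms] by (metis of_nat_sum)
  finally show ?thesis using sum_ind[OF fA] by simp
qed

lemma phi_Un: assumes "finite A" "finite B" "A \<inter> B = {}"
  shows "phi W Z (A \<union> B) = phi W Z A + phi W Z B"
  unfolding phi_def using assms by (simp add: sum.union_disjoint)


lemma prs_prsF: "prs A A = prsF E A" by (auto simp: prs_def prsF_def)

lemma conn_ins: "connected_on E A \<Longrightarrow> u \<in> A \<Longrightarrow> E u v \<Longrightarrow> connected_on E (insert v A)"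
  using conn_insert[of E] Esym by blast

lemma nb_Un: "nb (A \<union> B) v = nb A v \<union> nb B v" by (auto simp: nb_def)
lemma nb_diff: "nb (A - B) v = nb A v - B" by (auto simp: nb_def)

lemma card_nb_Un: "A \<subseteq> V \<Longrightarrow> B \<subseteq> V \<Longrightarrow> A \<inter> B = {} \<Longrightarrow> card (nb (A \<union> B) v) = card (nb A v) + card (nb B v)"
  unfolding nb_Un by (rule card_Un_disjoint) (use fin_nb in \<open>auto simp: nb_def\<close>)

lemma good_single: assumes "W \<subseteq> V" "v \<in> W" "int (dg W v) + ind Z v = 1" shows "good W Z {v}"
proof -
  have "nb (W - {v}) v = nb W v" using Eirr by (auto simp: nb_def)
  moreover have "prs {v} {v} = {}" using Eirr by (auto simp: prs_def)
  ultimately show ?thesis using assms conn_single by (auto simp: good_def dg_def)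
qed

lemma good_lift: assumes g: "good C Z' T" and CW: "C \<subseteq> W"
  and eq: "\<And>v. v \<in> T \<Longrightarrow> ind Z' v + int (card (nb (C - T) v)) = ind Z v + int (card (nb (W - T) v))"
  shows "good W Z T"
  using g CW eq by (auto simp: good_def)

lemma inst_fin: "inst W Z \<Longrightarrow> finite W" by (auto simp: inst_def fin_sub)

lemma conn_nb: assumes "connected_on E W" "v \<in> W" "W \<noteq> {v}" shows "nb W v \<noteq> {}"
proof -
  obtain u where u: "u \<in> W" "u \<noteq> v" using assms by blast
  have "\<exists>x\<in>{v}. \<exists>y\<in>W - {v}. E x y" using exit_edge[OF assms(1), of "{v}" v u] assms u by auto
  then show ?thesis by (auto simp: nb_def)
qed

lemma step_small: assumes inst: "inst W Z" and v: "v \<in> W" and le: "int (dg W v) + ind Z v \<le> 1"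
  shows "\<exists>T. good W Z T"
proof (cases "int (dg W v) + ind Z v = 1")
  case True then show ?thesis using good_single inst v by (auto simp: inst_def)
next
  case False
  then have z: "dg W v = 0" "ind Z v = 0" using le by (auto simp: ind_def split: if_splits)
  have fW: "finite W" using inst inst_fin by blast
  have "nb W v = {}" using z fin_nb inst by (auto simp: dg_def inst_def)
  then have "W = {v}" using conn_nb inst v by (auto simp: inst_def)
  then have "v \<in> Z" using inst by (auto simp: inst_def)
  then show ?thesis using z by (simp add: ind_def)
qed


definition ih :: "nat \<Rightarrow> bool" where
  "ih n \<longleftrightarrow> (\<forall>W' Z'. card W' < n \<longrightarrow> inst W' Z' \<longrightarrow> 2 \<le> phi W' Z' W' \<longrightarrow> (\<exists>T. good W' Z' T))"

lemma nb_side: assumes AB: "A \<union> B = W" "A \<inter> B = {}" and v: "v \<in> A" and b: "b \<in> B"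
  and only: "\<And>x y. x \<in> A \<Longrightarrow> y \<in> B \<Longrightarrow> E x y \<Longrightarrow> x = a \<and> y = b"
  shows "nb W v = nb (insert b A) v"
proof
  show "nb W v \<subseteq> nb (insert b A) v"
  proof
    fix u assume "u \<in> nb W v"
    then have u: "u \<in> W" "E v u" by (auto simp: nb_def)
    show "u \<in> nb (insert b A) v"
    proof (cases "u \<in> A")
      case True then show ?thesis using u by (auto simp: nb_def)
    next
      case False then have "u \<in> B" using u AB by blast
      then have "u = b" using only[OF v _ u(2)] by blast
      then show ?thesis using u by (auto simp: nb_def)
    qed
  qed
  show "nb (insert b A) v \<subseteq> nb W v" using AB b by (auto simp: nb_def)
qed

lemma nb_b: assumes a: "a \<in> A" and ab: "E a b" and bA: "b \<notin> A"
  and only: "\<And>x. x \<in> A \<Longrightarrow> E x b \<Longrightarrow> x = a"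
  shows "nb (insert b A) b = {a}"
proof
  show "nb (insert b A) b \<subseteq> {a}"
  proof
    fix u assume "u \<in> nb (insert b A) b"
    then have "u \<in> insert b A" "E b u" by (auto simp: nb_def)
    moreover then have "u \<noteq> b" using Eirr by blast
    ultimately show "u \<in> {a}" using only Esym by blast
  qed
  show "{a} \<subseteq> nb (insert b A) b" using a ab Esym by (auto simp: nb_def)
qed

lemma bridge_half:
  assumes ih: "ih (card W)" and inst: "inst W Z"
  and AB: "A \<union> B = W" "A \<inter> B = {}" and a: "a \<in> A" and b: "b \<in> B" and ab: "E a b"
  and only: "\<And>x y. x \<in> A \<Longrightarrow> y \<in> B \<Longrightarrow> E x y \<Longrightarrow> x = a \<and> y = b"
  and cA: "connected_on E A" and B2: "card B \<ge> 2" and pA: "phi W Z A \<ge> 1"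
  shows "\<exists>T. good (insert b A) (insert b (Z \<inter> A)) T"
proof -
  have WV: "W \<subseteq> V" using inst by (simp add: inst_def)
  have fW: "finite W" using WV fin_sub by blast
  have fA: "finite A" "finite B" using fW AB finite_subset by blast+
  have bA: "b \<notin> A" using AB b by blast
  have AV: "A \<subseteq> V" "insert b A \<subseteq> V" using AB WV b by blast+
  have "card (insert b A) = card A + 1" using fA bA by simp
  moreover have "card W = card A + card B" using AB fA card_Un_disjoint by metis
  ultimately have lt: "card (insert b A) < card W" using B2 by simp
  have ab': "a \<noteq> b" using a bA by blast
  have inst': "inst (insert b A) (insert b (Z \<inter> A))"
    unfolding inst_def
  proof (intro conjI)
    show "insert b A \<subseteq> V" using AV by simp
    show "connected_on E (insert b A)" using conn_ins[OF cA a ab] .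
    show "card (insert b A) = 1 \<longrightarrow> insert b A \<subseteq> insert b (Z \<inter> A)"
      using ab' a fA by (auto simp: card_insert_if card_1_singleton_iff)
  qed
  have dgA: "dg (insert b A) v = dg W v" if "v \<in> A" for v
    using nb_side[OF AB that b only] by (simp add: dg_def)
  have indA: "ind (insert b (Z \<inter> A)) v = ind Z v" if "v \<in> A" for v
    using that bA by (auto simp: ind_def)
  have onlyb: "\<And>x. x \<in> A \<Longrightarrow> E x b \<Longrightarrow> x = a" using only b by blast
  have "dg (insert b A) b = 1" using nb_b[OF a ab bA onlyb] by (simp add: dg_def)
  then have "phi (insert b A) (insert b (Z \<inter> A)) {b} = 1" by (simp add: phi_def ind_def)
  moreover have "phi (insert b A) (insert b (Z \<inter> A)) A = phi W Z A"
    unfolding phi_def using dgA indA by (intro sum.cong) auto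
  moreover have "phi (insert b A) (insert b (Z \<inter> A)) (insert b A) =
      phi (insert b A) (insert b (Z \<inter> A)) {b} + phi (insert b A) (insert b (Z \<inter> A)) A"
    using phi_Un[of "{b}" A] fA bA by simp
  ultimately have "phi (insert b A) (insert b (Z \<inter> A)) (insert b A) \<ge> 2" using pA by simp
  then show ?thesis using ih lt inst' by (auto simp: ih_def)
qed


lemma half_lift:
  assumes AB: "A \<union> B = W" "A \<inter> B = {}" and b: "b \<in> B"
  and only: "\<And>x y. x \<in> A \<Longrightarrow> y \<in> B \<Longrightarrow> E x y \<Longrightarrow> x = a \<and> y = b"
  and g: "good (insert b A) (insert b (Z \<inter> A)) T" and bT: "b \<notin> T"
  shows "good W Z T"
proof (rule good_lift[OF g])
  show "insert b A \<subseteq> W" using AB b by blast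
  fix v assume vT: "v \<in> T"
  have TA: "T \<subseteq> A" using g bT by (auto simp: good_def)
  then have vA: "v \<in> A" using vT by blast
  have "ind (insert b (Z \<inter> A)) v = ind Z v" using vA AB b by (auto simp: ind_def)
  moreover have "nb (insert b A - T) v = nb (W - T) v"
    using nb_side[OF AB vA b only] by (simp add: nb_diff)
  ultimately show "ind (insert b (Z \<inter> A)) v + int (card (nb (insert b A - T) v)) =
       ind Z v + int (card (nb (W - T) v))" by simp
qed

lemma half_contains: assumes g: "good (insert b A) (insert b (Z \<inter> A)) T" and bT: "b \<in> T"
  and a: "a \<in> A" and ab: "E a b" and fin: "finite A"
  shows "a \<in> T"
proof (rule ccontr)
  assume "a \<notin> T"
  then have "a \<in> nb (insert b A - T) b" using a ab Esym by (auto simp: nb_def)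
  moreover have "finite (nb (insert b A - T) b)" using fin by (auto simp: nb_def)
  ultimately have "card (nb (insert b A - T) b) \<ge> 1" by (metis One_nat_def Suc_leI card_gt_0_iff empty_iff)
  moreover have "ind (insert b (Z \<inter> A)) b = 1" by (simp add: ind_def)
  ultimately show False using g bT by (auto simp: good_def)
qed

lemma bridge:
  assumes ih: "ih (card W)" and inst: "inst W Z"
  and AB: "A \<union> B = W" "A \<inter> B = {}" and a: "a \<in> A" and b: "b \<in> B" and ab: "E a b"
  and only: "\<And>x y. x \<in> A \<Longrightarrow> y \<in> B \<Longrightarrow> E x y \<Longrightarrow> x = a \<and> y = b"
  and cA: "connected_on E A" and cB: "connected_on E B"
  and A2: "card A \<ge> 2" and B2: "card B \<ge> 2" and pA: "phi W Z A \<ge> 1" and pB: "phi W Z B \<ge> 1"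
  shows "\<exists>T. good W Z T"
proof -
  have WV: "W \<subseteq> V" using inst by (simp add: inst_def)
  have fW: "finite W" using WV fin_sub by blast
  have fA: "finite A" "finite B" using fW AB finite_subset by blast+
  have AB': "B \<union> A = W" "B \<inter> A = {}" using AB by blast+
  have ba: "E b a" using ab Esym by blast
  have only': "\<And>x y. x \<in> B \<Longrightarrow> y \<in> A \<Longrightarrow> E x y \<Longrightarrow> x = b \<and> y = a"
    using only Esym by blast
  obtain TA where gA: "good (insert b A) (insert b (Z \<inter> A)) TA"
    using bridge_half[OF ih inst AB a b ab only cA B2 pA] by blast
  obtain TB where gB: "good (insert a B) (insert a (Z \<inter> B)) TB"
    using bridge_half[OF ih inst AB' b a ba only' cB A2 pB] by blast
  show ?thesis
  proof (cases "b \<in> TA \<and> a \<in> TB")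
    case False
    show ?thesis
    proof (cases "b \<in> TA")
      case False then show ?thesis using half_lift[OF AB b only gA] by blast
    next
      case True then have "a \<notin> TB" using \<open>\<not> (b \<in> TA \<and> a \<in> TB)\<close> by blast
      then show ?thesis using half_lift[OF AB' a only' gB] by blast
    qed
  next
    case True
    then have bTA: "b \<in> TA" and aTB: "a \<in> TB" by auto
    have aTA: "a \<in> TA" using half_contains[OF gA bTA a ab fA(1)] .
    have bTB: "b \<in> TB" using half_contains[OF gB aTB b ba fA(2)] .
    have TAs: "TA \<subseteq> insert b A" and TBs: "TB \<subseteq> insert a B" using gA gB by (auto simp: good_def)
    have ab': "a \<noteq> b" using a b AB by blast
    define T where "T = TA \<union> TB"
    have int: "TA \<inter> TB = {a, b}" using TAs TBs AB aTA bTA aTB bTB by blast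
    have TAc: "T \<inter> insert b A = TA" using TAs TBs AB aTA bTA unfolding T_def by blast
    have TBc: "T \<inter> insert a B = TB" using TAs TBs AB aTB bTB unfolding T_def by blast
    have fTA: "finite TA" "finite TB" using TAs TBs fA finite_subset by blast+
    have TAV: "TA \<subseteq> V" "TB \<subseteq> V" using TAs TBs AB a b WV by blast+
    have cTA: "card TA \<ge> 2" "card TB \<ge> 2"
    proof -
      have "{a,b} \<subseteq> TA" "{a,b} \<subseteq> TB" using aTA bTA aTB bTB by auto
      then show "card TA \<ge> 2" "card TB \<ge> 2" using fTA ab' card_mono by (metis card_2_iff)+
    qed
    have cardT: "card T + 2 = card TA + card TB"
      using card_Un_Int[OF fTA] int ab' unfolding T_def by simp
    have pu: "prs T T = prs TA TA \<union> prs TB TB"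
    proof
      show "prs TA TA \<union> prs TB TB \<subseteq> prs T T" unfolding T_def by (auto simp: prs_def)
      show "prs T T \<subseteq> prs TA TA \<union> prs TB TB"
      proof
        fix p assume "p \<in> prs T T"
        then obtain x y where p: "p = (x,y)" "x \<in> T" "y \<in> T" "E x y" by (auto simp: prs_def)
        show "p \<in> prs TA TA \<union> prs TB TB"
        proof (rule ccontr)
          assume nn: "p \<notin> prs TA TA \<union> prs TB TB"
          then have "(x \<in> TA - TB \<and> y \<in> TB - TA) \<or> (x \<in> TB - TA \<and> y \<in> TA - TB)"
            using p unfolding T_def by (auto simp: prs_def)
          then show False
          proof
            assume "x \<in> TA - TB \<and> y \<in> TB - TA"
            then have "x \<in> A" "x \<noteq> a" "y \<in> B" using TAs TBs int aTB bTA by blast+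
            then show False using only p(4) by blast
          next
            assume "x \<in> TB - TA \<and> y \<in> TA - TB"
            then have "x \<in> B" "y \<in> A" "y \<noteq> a" using TAs TBs int aTB bTA by blast+
            then show False using only Esym p(4) by blast
          qed
        qed
      qed
    qed
    have pi: "prs TA TA \<inter> prs TB TB = {(a,b),(b,a)}"
    proof
      show "{(a,b),(b,a)} \<subseteq> prs TA TA \<inter> prs TB TB" using int ab ba unfolding prs_def by auto
      show "prs TA TA \<inter> prs TB TB \<subseteq> {(a,b),(b,a)}"
      proof
        fix p assume "p \<in> prs TA TA \<inter> prs TB TB"
        then obtain x y where p: "p = (x,y)" "x \<in> {a,b}" "y \<in> {a,b}" "E x y"
          using int unfolding prs_def by blast
        then show "p \<in> {(a,b),(b,a)}" using Eirr by auto
      qed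
    qed
    have fpr: "finite (prs TA TA)" "finite (prs TB TB)" using prs_fin TAV by blast+
    have "card (prs T T) + 2 = card (prs TA TA) + card (prs TB TB)"
      using card_Un_Int[OF fpr] pu pi ab' by simp
    then have cnt: "card (prs T T) = 2 * (card T - 1)"
      using gA gB cardT cTA unfolding good_def by simp
    have conn: "connected_on E T" unfolding T_def
      using conn_Un[of E TA TB] Esym gA gB int by (auto simp: good_def)
    have outs: "ind Z v + int (card (nb (W - T) v)) = 1" if vT: "v \<in> T" for v
    proof -
      have "v \<in> A \<or> v \<in> B" using vT TAs TBs a b unfolding T_def by blast
      then show ?thesis
      proof
        assume vA: "v \<in> A"
        then have vTA: "v \<in> TA" using vT TAc unfolding T_def by blast
        have "nb (W - T) v = nb (insert b A) v - TA"
          using nb_side[OF AB vA b only] TAc by (auto simp: nb_def)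
        then have "nb (W - T) v = nb (insert b A - TA) v" by (simp add: nb_diff)
        moreover have "ind (insert b (Z \<inter> A)) v = ind Z v" using vA AB b by (auto simp: ind_def)
        ultimately show ?thesis using gA vTA by (auto simp: good_def)
      next
        assume vB: "v \<in> B"
        then have vTB: "v \<in> TB" using vT TBc unfolding T_def by blast
        have "nb (W - T) v = nb (insert a B) v - TB"
          using nb_side[OF AB' vB a only'] TBc by (auto simp: nb_def)
        then have "nb (W - T) v = nb (insert a B - TB) v" by (simp add: nb_diff)
        moreover have "ind (insert a (Z \<inter> B)) v = ind Z v" using vB AB a by (auto simp: ind_def)
        ultimately show ?thesis using gB vTB by (auto simp: good_def)
      qed
    qed
    have "T \<subseteq> W" using TAs TBs AB a b unfolding T_def by blast
    then have "good W Z T" using conn cnt outs by (simp add: good_def)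
    then show ?thesis by blast
  qed
qed


lemma prs_insert_pend: assumes "nb W p = {q}" "p \<in> W" "X \<subseteq> W" "q \<in> X" "p \<notin> X"
  shows "prs (insert p X) (insert p X) = prs X X \<union> {(p,q),(q,p)}"
proof
  have pq: "E p q" "E q p" using assms(1) Esym by (auto simp: nb_def)
  show "prs X X \<union> {(p, q), (q, p)} \<subseteq> prs (insert p X) (insert p X)"
    using pq assms by (auto simp: prs_def)
  show "prs (insert p X) (insert p X) \<subseteq> prs X X \<union> {(p, q), (q, p)}"
  proof
    fix z assume "z \<in> prs (insert p X) (insert p X)"
    then obtain x y where z: "z = (x,y)" "x \<in> insert p X" "y \<in> insert p X" "E x y" by (auto simp: prs_def)
    have nbp: "\<And>u. u \<in> W \<Longrightarrow> E p u \<Longrightarrow> u = q" using assms(1) by (auto simp: nb_def)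
    show "z \<in> prs X X \<union> {(p, q), (q, p)}"
    proof (cases "x = p")
      case True then have "y = q" using nbp z assms(3) Eirr by blast
      then show ?thesis using z True by simp
    next
      case False
      show ?thesis
      proof (cases "y = p")
        case True then have "x = q" using nbp z assms(3) Esym False by blast
        then show ?thesis using z True by simp
      next
        case False then show ?thesis using z \<open>x \<noteq> p\<close> by (auto simp: prs_def)
      qed
    qed
  qed
qed

lemma pendant:
  assumes ih: "ih (card W)" and inst: "inst W Z" and ph: "phi W Z W \<ge> 2"
  and p: "p \<in> W" and dp: "dg W p = 1" and pZ: "p \<in> Z"
  and hyp: "\<And>v. v \<in> W \<Longrightarrow> int (dg W v) + ind Z v \<ge> 2"
  shows "\<exists>T. good W Z T"
proof -
  have WV: "W \<subseteq> V" using inst by (simp add: inst_def)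
  have fW: "finite W" using WV fin_sub by blast
  obtain q where nq: "nb W p = {q}" using dp by (auto simp: dg_def card_1_singleton_iff)
  have q: "q \<in> W" "E p q" "E q p" using nq Esym by (auto simp: nb_def)
  have qp: "q \<noteq> p" using q Eirr by blast
  define W' where "W' = W - {p}"
  have W'W: "W' \<subseteq> W" and qW': "q \<in> W'" and pW': "p \<notin> W'" using q qp by (auto simp: W'_def)
  have Wi: "W = insert p W'" using p by (auto simp: W'_def)
  have onlyq: "\<And>y. y \<in> W \<Longrightarrow> E y p \<Longrightarrow> y = q" using nq Esym by (auto simp: nb_def)
  have cW': "connected_on E W'"
  proof (rule conn_bridge[of E W W' q])
    show "\<And>x y. E x y \<Longrightarrow> E y x" using Esym by blast
    show "connected_on E W" using inst by (simp add: inst_def)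
    show "W' \<subseteq> W" using W'W .
    show "q \<in> W'" using qW' .
    fix y x assume "y \<in> W'" "x \<in> W - W'" "E y x"
    then show "y = q" using onlyq W'W by (auto simp: W'_def)
  qed
  have fW': "finite W'" using W'W fW finite_subset by blast
  have inst': "inst W' Z"
    unfolding inst_def
  proof (intro conjI impI)
    show "W' \<subseteq> V" using W'W WV by blast
    show "connected_on E W'" using cW' .
    assume c1: "card W' = 1"
    then obtain r where "W' = {r}" by (auto simp: card_1_singleton_iff)
    then have W'q: "W' = {q}" using qW' by simp
    then have "nb W q \<subseteq> {p}" using Wi Eirr by (auto simp: nb_def)
    moreover have "p \<in> nb W q" using q p by (auto simp: nb_def)
    ultimately have "nb W q = {p}" by blast
    then have "dg W q = 1" by (simp add: dg_def)
    then have "ind Z q \<ge> 1" using hyp[OF q(1)] by simp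
    then have "q \<in> Z" by (simp add: ind_def split: if_splits)
    then show "W' \<subseteq> Z" using W'q by simp
  qed
  have ppr: "prs W W = prs W' W' \<union> {(p,q),(q,p)}"
    using prs_insert_pend[OF nq p W'W qW' pW'] Wi by simp
  have W'V: "W' \<subseteq> V" using W'W WV by blast
  have "(p,q) \<notin> prs W' W'" "(q,p) \<notin> prs W' W'" using pW' by (auto simp: prs_def)
  then have cp: "card (prs W W) = card (prs W' W') + 2"
    using ppr prs_fin[OF W'V W'V] qp by (simp add: card_insert_if)
  have cW: "card W = card W' + 1" using Wi pW' fW' by simp
  have cZ: "card (W \<inter> Z) = card (W' \<inter> Z) + 1"
  proof -
    have "W \<inter> Z = insert p (W' \<inter> Z)" using Wi pZ by blast
    then show ?thesis using pW' fW' by simp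
  qed
  have "phi W' Z W' = phi W Z W"
    using phi_eq[OF W'V W'V] phi_eq[OF WV WV] cp cW cZ by simp
  then have "2 \<le> phi W' Z W'" using ph by simp
  moreover have "card W' < card W" using cW by simp
  ultimately obtain T' where gT': "good W' Z T'" using ih inst' unfolding ih_def by blast
  have T'W': "T' \<subseteq> W'" using gT' by (simp add: good_def)
  show ?thesis
  proof (cases "q \<in> T'")
    case False
    have "good W Z T'"
    proof (rule good_lift[OF gT' W'W])
      fix v assume vT: "v \<in> T'"
      have "nb (W - T') v = nb (W' - T') v"
      proof -
        have "v \<noteq> q" using vT False by blast
        then have "\<not> E v p" using onlyq vT T'W' W'W by blast
        then show ?thesis using Wi by (auto simp: nb_def)
      qed
      then show "ind Z v + int (card (nb (W' - T') v)) = ind Z v + int (card (nb (W - T') v))" by simp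
    qed
    then show ?thesis by blast
  next
    case True
    define T where "T = insert p T'"
    have fT': "finite T'" using T'W' fW' finite_subset by blast
    have T'V: "T' \<subseteq> V" using T'W' W'V by blast
    have pT': "p \<notin> T'" using T'W' pW' by blast
    have prT: "prs T T = prs T' T' \<union> {(p,q),(q,p)}"
      unfolding T_def using prs_insert_pend[OF nq p _ True pT'] T'W' W'W by blast
    have "(p,q) \<notin> prs T' T'" "(q,p) \<notin> prs T' T'" using pT' by (auto simp: prs_def)
    then have cpT: "card (prs T T) = card (prs T' T') + 2"
      using prT prs_fin[OF T'V T'V] qp by (simp add: card_insert_if)
    have cT: "card T = card T' + 1" unfolding T_def using pT' fT' by simp
    have c1: "card T' \<ge> 1" using True fT' by (metis One_nat_def Suc_leI card_gt_0_iff empty_iff)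
    have cnt: "card (prs T T) = 2 * (card T - 1)"
      using cpT cT c1 gT' by (simp add: good_def)
    have conn: "connected_on E T" unfolding T_def using conn_ins gT' True q(3) by (auto simp: good_def)
    have WT: "W - T = W' - T'" unfolding T_def W'_def by blast
    have outs: "ind Z v + int (card (nb (W - T) v)) = 1" if "v \<in> T" for v
    proof (cases "v = p")
      case True
      have "nb (W - T) p = {}" using nq \<open>q \<in> T'\<close> unfolding T_def by (auto simp: nb_def)
      then show ?thesis using True pZ by (simp add: ind_def)
    next
      case False then have "v \<in> T'" using that unfolding T_def by blast
      then show ?thesis using gT' WT by (auto simp: good_def)
    qed
    have "T \<subseteq> W" unfolding T_def using T'W' W'W p by blast
    then have "good W Z T" using conn cnt outs by (simp add: good_def)
    then show ?thesis by blast
  qed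
qed


lemma comp_bound:
  assumes ih: "ih (card W)" and inst: "inst W Z" and ph: "phi W Z W \<ge> 2"
  and nog: "\<not> (\<exists>T. good W Z T)"
  and deg2: "\<And>v. v \<in> W \<Longrightarrow> dg W v \<ge> 2"
  and QW: "Q \<subseteq> W" "Q \<noteq> {}" and cQ: "connected_on E Q"
  and x: "x \<in> W - Q"
  and cl: "\<And>v. v \<in> W - Q \<Longrightarrow> ind Z v + int (card (nb Q v)) \<le> 1"
  shows "phi W Z (cmp E (W - Q) x) \<le> 1 \<and>
         phi W Z (cmp E (W - Q) x) + 1 \<le> int (card (prs (cmp E (W - Q) x) Q))"
proof -
  define R where "R = W - Q"
  define C where "C = cmp E R x"
  have WV: "W \<subseteq> V" using inst by (simp add: inst_def)
  have fW: "finite W" using WV fin_sub by blast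
  have cW: "connected_on E W" using inst by (simp add: inst_def)
  have xR: "x \<in> R" using x by (simp add: R_def)
  have CR: "C \<subseteq> R" unfolding C_def using cmp_sub[OF xR] .
  have xC: "x \<in> C" unfolding C_def by (rule cmp_self)
  have cC: "connected_on E C" unfolding C_def by (rule cmp_conn[OF _ xR]) (rule Esym)
  have CW: "C \<subseteq> W" using CR by (auto simp: R_def)
  have CV: "C \<subseteq> V" "Q \<subseteq> V" using CW QW WV by blast+
  have fC: "finite C" using CV fin_sub by blast
  have CQ: "C \<inter> Q = {}" using CR by (auto simp: R_def)
  have clo: "u \<in> C" if "v \<in> C" "u \<in> W" "E v u" "u \<notin> Q" for v u
  proof -
    have "u \<in> R" using that by (simp add: R_def)
    moreover have "v \<in> R" using that CR by blast
    moreover have "v \<in> cmp E R x" using that by (simp add: C_def)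
    ultimately show ?thesis unfolding C_def using that cmp_closed by metis
  qed
  have nbW: "nb W v = nb C v \<union> nb Q v" if "v \<in> C" for v
    using clo[OF that] CW QW by (auto simp: nb_def)
  have dgW: "dg W v = dg C v + card (nb Q v)" if "v \<in> C" for v
    unfolding dg_def nbW[OF that] using card_nb_Un[OF CV CQ] nb_Un by metis
  obtain q0 where q0: "q0 \<in> Q" using QW by blast
  have e1: "card (prs C Q) \<ge> 1"
  proof -
    have "q0 \<in> W" "q0 \<notin> C" using q0 QW CQ by blast+
    then obtain u v where uv: "u \<in> C" "v \<in> W - C" "E u v" using exit_edge[OF cW CW xC] by blast
    then have "v \<in> Q" using clo by blast
    then have "(u,v) \<in> prs C Q" using uv by (simp add: prs_def)
    moreover have "finite (prs C Q)" using prs_fin CV by blast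
    ultimately show ?thesis by (metis One_nat_def Suc_leI card_gt_0_iff empty_iff)
  qed
  define ZC where "ZC = {v \<in> C. ind Z v + int (card (nb Q v)) = 1}"
  have indC: "ind ZC v = ind Z v + int (card (nb Q v))" if "v \<in> C" for v
  proof -
    have "ind Z v + int (card (nb Q v)) \<le> 1" using cl that CR by (auto simp: R_def)
    moreover have "ind Z v \<ge> 0" by (simp add: ind_def)
    ultimately show ?thesis using that by (auto simp: ind_def ZC_def)
  qed
  have phiC: "phi C ZC C = phi W Z C"
    unfolding phi_def using dgW indC by (intro sum.cong) auto
  have instC: "inst C ZC"
    unfolding inst_def
  proof (intro conjI impI)
    show "C \<subseteq> V" using CV by blast
    show "connected_on E C" using cC .
    assume "card C = 1"
    then obtain c where Cc: "C = {c}" by (auto simp: card_1_singleton_iff)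
    have "prs C Q \<noteq> {}" using e1 by auto
    then obtain u v where "(u,v) \<in> prs C Q" by auto
    then have "v \<in> nb Q c" using Cc by (auto simp: prs_def nb_def)
    moreover have "finite (nb Q c)" using fin_nb CV by blast
    ultimately have "card (nb Q c) \<ge> 1" by (metis One_nat_def Suc_leI card_gt_0_iff empty_iff)
    then have "ind ZC c \<ge> 1" using indC[of c] Cc by (simp add: ind_def)
    then show "C \<subseteq> ZC" using Cc by (simp add: ind_def split: if_splits)
  qed
  have ltC: "card C < card W"
  proof -
    have "C \<subset> W" using CW q0 CQ QW by blast
    then show ?thesis using fW psubset_card_mono by blast
  qed
  have le1: "phi W Z C \<le> 1"
  proof (rule ccontr)
    assume "\<not> phi W Z C \<le> 1"
    then have "2 \<le> phi C ZC C" using phiC by simp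
    then obtain T where gT: "good C ZC T" using ih instC ltC unfolding ih_def by blast
    have "good W Z T"
    proof (rule good_lift[OF gT CW])
      fix v assume vT: "v \<in> T"
      have TC: "T \<subseteq> C" using gT by (simp add: good_def)
      then have vC: "v \<in> C" using vT by blast
      have "nb (W - T) v = nb (C - T) v \<union> nb Q v" using nbW[OF vC] TC CQ by (auto simp: nb_def)
      moreover have "card (nb (C - T) v \<union> nb Q v) = card (nb (C - T) v) + card (nb Q v)"
      proof -
        have "card (nb ((C - T) \<union> Q) v) = card (nb (C - T) v) + card (nb Q v)"
          by (rule card_nb_Un) (use CV CQ in auto)
        then show ?thesis by (simp add: nb_Un)
      qed
      ultimately show "ind ZC v + int (card (nb (C - T) v)) = ind Z v + int (card (nb (W - T) v))"
        using indC[OF vC] by simp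
    qed
    then show False using nog by blast
  qed
  have main: "phi W Z C + 1 \<le> int (card (prs C Q))"
  proof (cases "card (prs C Q) \<ge> 2")
    case True then show ?thesis using le1 by simp
  next
    case False
    then have e: "card (prs C Q) = 1" using e1 by simp
    show ?thesis
    proof (rule ccontr)
      assume "\<not> ?thesis"
      then have p1: "phi W Z C = 1" using le1 e by simp
      obtain c q where cq: "prs C Q = {(c,q)}" using e by (auto simp: card_1_singleton_iff)
      have c: "c \<in> C" and q: "q \<in> Q" and ecq: "E c q" using cq by (auto simp: prs_def)
      have only: "x' = c \<and> y = q" if "x' \<in> C" "y \<in> W - C" "E x' y" for x' y
      proof -
        have "y \<in> Q" using clo that by blast
        then have "(x',y) \<in> prs C Q" using that by (simp add: prs_def)
        then show ?thesis using cq by simp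
      qed
      have AB: "C \<union> (W - C) = W" "C \<inter> (W - C) = {}" using CW by blast+
      have qB: "q \<in> W - C" using q QW CQ by blast
      have cB: "connected_on E (W - C)"
      proof (rule conn_bridge[of E W "W - C" q])
        show "\<And>x y. E x y \<Longrightarrow> E y x" using Esym by blast
        show "connected_on E W" using cW .
        show "W - C \<subseteq> W" by blast
        show "q \<in> W - C" using qB .
        fix y x' assume "y \<in> W - C" "x' \<in> W - (W - C)" "E y x'"
        then show "y = q" using only[of x' y] Esym CW by blast
      qed
      have A2: "card C \<ge> 2"
      proof -
        have nbQc: "nb Q c \<subseteq> {q}" using cq by (auto simp: nb_def prs_def c)
        have "card (nb Q c) \<le> 1" using card_mono[OF _ nbQc] by simp
        then have "dg C c \<ge> 1" using dgW[OF c] deg2 CW c by fastforce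
        then have "nb C c \<noteq> {}" by (auto simp: dg_def)
        then obtain u where u: "u \<in> C" "E c u" by (auto simp: nb_def)
        then have "u \<noteq> c" using Eirr by blast
        then have "{c,u} \<subseteq> C" using u c by blast
        then show ?thesis using fC \<open>u \<noteq> c\<close> by (metis card_2_iff card_mono)
      qed
      have B2: "card (W - C) \<ge> 2"
      proof -
        have "dg W q \<ge> 2" using deg2 q QW by blast
        then have "card (nb W q) \<ge> 2" by (simp add: dg_def)
        have "\<not> nb W q \<subseteq> {c}"
        proof
          assume "nb W q \<subseteq> {c}"
          then have "card (nb W q) \<le> 1" using card_mono[of "{c}"] by fastforce
          then show False using \<open>card (nb W q) \<ge> 2\<close> by simp
        qed
        then obtain u where u: "u \<in> nb W q" "u \<noteq> c" by blast
        then have uW: "u \<in> W" "E q u" by (auto simp: nb_def)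
        have "u \<notin> C"
        proof
          assume "u \<in> C"
          then have "(u,q) \<in> prs C Q" using q uW Esym by (simp add: prs_def)
          then show False using cq u by simp
        qed
        moreover have "u \<noteq> q" using uW Eirr by blast
        ultimately have "{q,u} \<subseteq> W - C" using uW qB by blast
        moreover have "finite (W - C)" using fW by blast
        ultimately show ?thesis using \<open>u \<noteq> q\<close> by (metis card_2_iff card_mono)
      qed
      have pB: "phi W Z (W - C) \<ge> 1"
      proof -
        have "phi W Z W = phi W Z C + phi W Z (W - C)"
          using phi_Un[of C "W - C" W Z] fC fW AB by (metis finite_Diff)
        then show ?thesis using ph p1 by simp
      qed
      have "\<exists>T. good W Z T"
        using bridge[OF ih inst AB c qB ecq only cC cB A2 B2 _ pB] p1 by simp
      then show False using nog by blast
    qed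
  qed
  show ?thesis using le1 main unfolding C_def R_def by simp
qed


lemma comps_sum:
  assumes ih: "ih (card W)" and inst: "inst W Z" and ph: "phi W Z W \<ge> 2"
  and nog: "\<not> (\<exists>T. good W Z T)"
  and deg2: "\<And>v. v \<in> W \<Longrightarrow> dg W v \<ge> 2"
  and QW: "Q \<subseteq> W" "Q \<noteq> {}" and cQ: "connected_on E Q"
  and RNE: "W - Q \<noteq> {}"
  and cl: "\<And>v. v \<in> W - Q \<Longrightarrow> ind Z v + int (card (nb Q v)) \<le> 1"
  shows "phi W Z (W - Q) + int (card ((cmp E (W - Q)) ` (W - Q))) \<le> int (card (prs (W - Q) Q))
    \<and> phi W Z (W - Q) \<le> int (card ((cmp E (W - Q)) ` (W - Q)))
    \<and> card ((cmp E (W - Q)) ` (W - Q)) \<ge> 1"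
proof -
  define R where "R = W - Q"
  define K where "K = (cmp E R) ` R"
  have WV: "W \<subseteq> V" using inst by (simp add: inst_def)
  have RV: "R \<subseteq> V" "Q \<subseteq> V" using WV QW by (auto simp: R_def)
  have fR: "finite R" using RV fin_sub by blast
  have fK: "finite K" using fR by (simp add: K_def)
  have UK: "\<Union>K = R"
  proof
    show "\<Union>K \<subseteq> R" unfolding K_def using cmp_sub[of _ R E] by blast
    show "R \<subseteq> \<Union>K" unfolding K_def using cmp_self[of _ E R] by blast
  qed
  have finK: "\<forall>C\<in>K. finite C"
  proof
    fix C assume "C \<in> K"
    then have "C \<subseteq> R" using UK by blast
    then show "finite C" using fR finite_subset by blast
  qed
  have disj: "\<forall>A\<in>K. \<forall>B\<in>K. A \<noteq> B \<longrightarrow> A \<inter> B = {}"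
  proof (intro ballI impI)
    fix A B assume A: "A \<in> K" and B: "B \<in> K" and ne: "A \<noteq> B"
    obtain a where a: "A = cmp E R a" using A by (auto simp: K_def)
    obtain b where b: "B = cmp E R b" using B by (auto simp: K_def)
    show "A \<inter> B = {}"
    proof (rule ccontr)
      assume "A \<inter> B \<noteq> {}"
      then obtain y where yA: "y \<in> A" and yB: "y \<in> B" by blast
      have "cmp E R y = cmp E R a" using yA a by (intro cmp_same) (auto intro: Esym)
      moreover have "cmp E R y = cmp E R b" using yB b by (intro cmp_same) (auto intro: Esym)
      ultimately show False using ne a b by simp
    qed
  qed
  have sumU: "\<And>f::'a \<Rightarrow> int. sum f R = (\<Sum>C\<in>K. sum f C)"
    using sum.Union_disjoint[OF finK disj] UK by simp
  have phiR: "phi W Z R = (\<Sum>C\<in>K. phi W Z C)" unfolding phi_def by (rule sumU)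
  have prsR: "int (card (prs R Q)) = (\<Sum>C\<in>K. int (card (prs C Q)))"
  proof -
    have "int (card (prs R Q)) = (\<Sum>v\<in>R. int (card (nb Q v)))"
      using card_prs_sum[OF RV] by simp
    also have "\<dots> = (\<Sum>C\<in>K. \<Sum>v\<in>C. int (card (nb Q v)))" by (rule sumU)
    also have "\<dots> = (\<Sum>C\<in>K. int (card (prs C Q)))"
    proof (rule sum.cong)
      fix C assume "C \<in> K"
      then have "C \<subseteq> V" using UK RV by blast
      then show "(\<Sum>v\<in>C. int (card (nb Q v))) = int (card (prs C Q))"
        using card_prs_sum[of C Q] RV by simp
    qed simp
    finally show ?thesis .
  qed
  have bnd: "phi W Z C \<le> 1 \<and> phi W Z C + 1 \<le> int (card (prs C Q))" if CK: "C \<in> K" for C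
  proof -
    obtain x where x: "x \<in> R" "C = cmp E R x" using CK unfolding K_def by blast
    show ?thesis using comp_bound[OF ih inst ph nog deg2 QW cQ _ cl, of x] x by (simp add: R_def)
  qed
  have s1: "(\<Sum>C\<in>K. phi W Z C + 1) \<le> (\<Sum>C\<in>K. int (card (prs C Q)))"
    by (rule sum_mono) (use bnd in blast)
  have s2: "(\<Sum>C\<in>K. phi W Z C) \<le> (\<Sum>C\<in>K. 1)"
    by (rule sum_mono) (use bnd in blast)
  have "(\<Sum>C\<in>K. phi W Z C + 1) = phi W Z R + int (card K)"
    using phiR by (simp add: sum.distrib)
  moreover have "K \<noteq> {}" using RNE by (auto simp: K_def R_def)
  ultimately show ?thesis using s1 s2 prsR phiR fK unfolding K_def R_def
    by (simp add: Suc_leI card_gt_0_iff)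
qed


lemma card_prs_UnUn: assumes "A \<subseteq> V" "B \<subseteq> V" "A \<inter> B = {}"
  shows "card (prs (A \<union> B) (A \<union> B)) = card (prs A A) + card (prs B B) + 2 * card (prs A B)"
proof -
  have f: "finite (prs X Y)" if "X \<subseteq> V" "Y \<subseteq> V" for X Y using prs_fin that by blast
  have "prs (A \<union> B) (A \<union> B) = (prs A A \<union> prs A B) \<union> (prs B A \<union> prs B B)"
    by (auto simp: prs_def)
  moreover have "card ((prs A A \<union> prs A B) \<union> (prs B A \<union> prs B B)) =
      card (prs A A \<union> prs A B) + card (prs B A \<union> prs B B)"
    by (rule card_Un_disjoint) (use assms f in \<open>auto simp: prs_def\<close>)
  moreover have "card (prs A A \<union> prs A B) = card (prs A A) + card (prs A B)"
    by (rule card_Un_disjoint) (use assms f in \<open>auto simp: prs_def\<close>)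
  moreover have "card (prs B A \<union> prs B B) = card (prs B A) + card (prs B B)"
    by (rule card_Un_disjoint) (use assms f in \<open>auto simp: prs_def\<close>)
  moreover have "card (prs B A) = card (prs A B)" using card_prs_swap assms by metis
  ultimately show ?thesis by simp
qed

lemma prs_single: "prs {v} {v} = {}" using Eirr by (auto simp: prs_def)

lemma card_prs_single: "v \<in> V \<Longrightarrow> B \<subseteq> V \<Longrightarrow> card (prs {v} B) = card (nb B v)"
  using card_prs_sum[of "{v}" B] by simp

theorem K: "inst W Z \<Longrightarrow> 2 \<le> phi W Z W \<Longrightarrow> \<exists>T. good W Z T"
proof (induction "card W" arbitrary: W Z rule: less_induct)
  case less
  have ih: "ih (card W)" unfolding ih_def using less.hyps by blast
  have inst: "inst W Z" and ph: "2 \<le> phi W Z W" using less.prems by auto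
  have WV: "W \<subseteq> V" using inst by (simp add: inst_def)
  have fW: "finite W" using WV fin_sub by blast
  have cW: "connected_on E W" using inst by (simp add: inst_def)
  show ?case
  proof (rule ccontr)
    assume nog: "\<not> (\<exists>T. good W Z T)"
    have s2: "int (dg W v) + ind Z v \<ge> 2" if "v \<in> W" for v
    proof (rule ccontr)
      assume "\<not> ?thesis"
      then show False using step_small[OF inst that] nog by simp
    qed
    have deg2: "dg W v \<ge> 2" if v: "v \<in> W" for v
    proof (rule ccontr)
      assume "\<not> ?thesis"
      moreover have "ind Z v \<le> 1" by (simp add: ind_def)
      ultimately have "dg W v = 1" "ind Z v = 1" using s2[OF v] by auto
      then have "v \<in> Z" by (simp add: ind_def split: if_splits)
      then show False using pendant[OF ih inst ph v \<open>dg W v = 1\<close> _ s2] nog by blast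
    qed
    show False
    proof (cases "W \<inter> Z = {}")
      case False
      then obtain w where wW: "w \<in> W" and wZ: "w \<in> Z" by blast
      let ?Inv = "\<lambda>Q. Q \<subseteq> W \<and> w \<in> Q \<and> connected_on E Q \<and>
          int (card (prs Q Q)) \<ge> 2 * (int (card Q) - 1) \<and>
          int (card (prs Q Q)) + 2 * int (card (Q \<inter> Z)) \<ge> 4 * int (card Q) - 2"
      have I0: "?Inv {w}" using wW wZ conn_single prs_single by simp
      have bnd: "\<forall>Q. ?Inv Q \<longrightarrow> card Q < Suc (card W)"
        using fW by (auto simp: card_mono le_imp_less_Suc)
      obtain Q where IQ: "?Inv Q" and mx: "\<forall>Q'. ?Inv Q' \<longrightarrow> card Q' \<le> card Q"
        using Lattices_Big.ex_has_greatest_nat[of ?Inv "{w}" card, OF I0 bnd] by blast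
      have QW: "Q \<subseteq> W" and wQ: "w \<in> Q" and cQ: "connected_on E Q" using IQ by auto
      have QV: "Q \<subseteq> V" using QW WV by blast
      have fQ: "finite Q" using QV fin_sub by blast
      have cl: "ind Z v + int (card (nb Q v)) \<le> 1" if vW: "v \<in> W - Q" for v
      proof (rule ccontr)
        assume a: "\<not> ?thesis"
        have i1: "ind Z v \<le> 1" by (simp add: ind_def)
        then have "card (nb Q v) \<ge> 1" using a by simp
        then have "nb Q v \<noteq> {}" by auto
        then obtain u where u: "u \<in> Q" "E v u" by (auto simp: nb_def)
        have vQ: "v \<notin> Q" and vV: "v \<in> V" using vW WV by auto
        have cQ': "connected_on E (insert v Q)" using conn_ins[OF cQ u(1)] Esym u(2) by blast
        have "card (prs ({v} \<union> Q) ({v} \<union> Q)) = card (prs {v} {v}) + card (prs Q Q) + 2 * card (prs {v} Q)"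
          by (rule card_prs_UnUn) (use vV QV vQ in auto)
        then have pe: "card (prs (insert v Q) (insert v Q)) = card (prs Q Q) + 2 * card (nb Q v)"
          using prs_single card_prs_single[OF vV QV] by simp
        have ce: "card (insert v Q) = card Q + 1" using vQ fQ by simp
        have ze: "int (card (insert v Q \<inter> Z)) = int (card (Q \<inter> Z)) + ind Z v"
        proof (cases "v \<in> Z")
          case True
          then have "insert v Q \<inter> Z = insert v (Q \<inter> Z)" by blast
          then show ?thesis using True vQ fQ by (simp add: ind_def)
        next
          case False
          then have "insert v Q \<inter> Z = Q \<inter> Z" by blast
          then show ?thesis using False by (simp add: ind_def)
        qed
        have "?Inv (insert v Q)"
          using IQ cQ' pe ce ze vW a \<open>card (nb Q v) \<ge> 1\<close> by auto
        then have "card (insert v Q) \<le> card Q" using mx by blast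
        then show False using ce by simp
      qed
      have PQ: "card (prs Q W) = card (prs Q Q) + card (prs (W - Q) Q)"
      proof -
        have "W = Q \<union> (W - Q)" using QW by blast
        have WQV: "W - Q \<subseteq> V" using WV by blast
        have "card (prs Q (Q \<union> (W - Q))) = card (prs Q Q) + card (prs Q (W - Q))"
          by (rule card_prs_Un2) (use QV WQV in auto)
        then have "card (prs Q W) = card (prs Q Q) + card (prs Q (W - Q))"
          using \<open>W = Q \<union> (W - Q)\<close> by simp
        moreover have "card (prs Q (W - Q)) = card (prs (W - Q) Q)"
          using card_prs_swap[OF QV WQV] .
        ultimately show ?thesis by simp
      qed
      have phQ: "phi W Z Q = 3 * int (card Q) - int (card (prs Q W)) - int (card (Q \<inter> Z))"
        using phi_eq[OF QV WV] .
      show False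
      proof (cases "Q = W")
        case True
        have "card (W \<inter> Z) \<le> card W" using fW by (simp add: card_mono)
        then have eqs: "int (card (prs W W)) = 2 * (int (card W) - 1)" "card (W \<inter> Z) = card W"
          using IQ True ph phQ PQ by auto
        have "W \<inter> Z = W" using card_subset_eq[OF fW _ eqs(2)] by blast
        then have WZ: "W \<subseteq> Z" by blast
        have "card W \<noteq> 0" using wW fW by auto
        then have cW1: "card W \<ge> 1" by simp
        have "good W Z W" unfolding good_def
        proof (intro conjI ballI)
          show "W \<subseteq> W" by simp
          show "connected_on E W" using cW .
          have "int (card (prs W W)) = int (2 * (card W - 1))" using eqs(1) cW1 by (simp add: of_nat_diff)
          then show "card (prs W W) = 2 * (card W - 1)" by (simp only: of_nat_eq_iff)
          fix v assume "v \<in> W"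
          then show "ind Z v + int (card (nb (W - W) v)) = 1" using WZ by (auto simp: ind_def nb_def)
        qed
        then show False using nog by blast
      next
        case False
        then have RNE: "W - Q \<noteq> {}" using QW by blast
        have cs: "phi W Z (W - Q) + int (card ((cmp E (W - Q)) ` (W - Q))) \<le> int (card (prs (W - Q) Q))
            \<and> card ((cmp E (W - Q)) ` (W - Q)) \<ge> 1"
          using comps_sum[OF ih inst ph nog deg2 QW _ cQ RNE cl] wQ by blast
        have split: "phi W Z W = phi W Z Q + phi W Z (W - Q)"
        proof -
          have "W = Q \<union> (W - Q)" using QW by blast
          moreover have "finite (W - Q)" using fW by blast
          moreover have "Q \<inter> (W - Q) = {}" by blast
          ultimately show ?thesis using phi_Un[of Q "W - Q" W Z] fQ by simp
        qed
        have "phi W Z Q \<le> 2 - int (card (prs (W - Q) Q))" using phQ PQ IQ by auto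
        then show False using split cs ph by linarith
      qed
    next
      case True
      then have ind0: "ind Z v = 0" if "v \<in> W" for v using that by (auto simp: ind_def)
      show False
      proof (cases "\<exists>f\<in>W. dg W f \<ge> 3")
        case True
        then obtain f where fW': "f \<in> W" and d3: "dg W f \<ge> 3" by blast
        have fV: "f \<in> V" using fW' WV by blast
        have QW: "{f} \<subseteq> W" "{f} \<noteq> {}" using fW' by auto
        have cl: "ind Z v + int (card (nb {f} v)) \<le> 1" if "v \<in> W - {f}" for v
        proof -
          have "card (nb {f} v) \<le> 1" using card_mono[of "{f}" "nb {f} v"] nb_sub[of "{f}" v] by simp
          then show ?thesis using ind0 that by simp
        qed
        have nbf: "nb (W - {f}) f = nb W f" using Eirr by (auto simp: nb_def)
        have "dg W f \<noteq> 0" using d3 by simp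
        then have "nb W f \<noteq> {}" by (auto simp: dg_def)
        then have RNE: "W - {f} \<noteq> {}" using nb_sub[of W f] Eirr by (auto simp: nb_def)
        have cs: "phi W Z (W - {f}) + int (card ((cmp E (W - {f})) ` (W - {f}))) \<le> int (card (prs (W - {f}) {f}))
          \<and> phi W Z (W - {f}) \<le> int (card ((cmp E (W - {f})) ` (W - {f})))"
          using comps_sum[OF ih inst ph nog deg2 QW conn_single RNE cl] by blast
        have WfV: "W - {f} \<subseteq> V" using WV by blast
        have "card (prs (W - {f}) {f}) = card (prs {f} (W - {f}))"
          using card_prs_swap[OF WfV] fV by simp
        also have "\<dots> = dg W f" using card_prs_single[OF fV WfV] nbf by (simp add: dg_def)
        finally have e: "card (prs (W - {f}) {f}) = dg W f" .
        have split: "phi W Z W = phi W Z {f} + phi W Z (W - {f})"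
        proof -
          have "W = {f} \<union> (W - {f})" using fW' by blast
          moreover have "finite (W - {f})" using fW by blast
          moreover have "{f} \<inter> (W - {f}) = {}" by blast
          ultimately show ?thesis using phi_Un[of "{f}" "W - {f}" W Z] by simp
        qed
        have pf: "phi W Z {f} = 3 - int (dg W f)" using ind0[OF fW'] by (simp add: phi_def)
        define s where "s = phi W Z (W - {f})"
        define d where "d = int (dg W f)"
        have "2 * s \<le> d" using cs e unfolding s_def d_def by linarith
        moreover have "d \<ge> 3" using d3 unfolding d_def by simp
        ultimately have "s \<le> d - 2" by presburger
        then show False using split pf ph unfolding s_def d_def by linarith
      next
        case False
        then have d2: "dg W v = 2" if "v \<in> W" for v using deg2[OF that] that by force
        obtain v where vW: "v \<in> W" using cW by (auto simp: conn_def2)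
        have "dg W v \<noteq> 0" using d2[OF vW] by simp
        then have "nb W v \<noteq> {}" by (auto simp: dg_def)
        then obtain u where uW: "u \<in> W" and vu: "E v u" by (auto simp: nb_def)
        have uv: "u \<noteq> v" using vu Eirr by blast
        have uV: "u \<in> V" "v \<in> V" using uW vW WV by auto
        have out1: "card (nb (W - {u, v}) x) = 1" if "x \<in> {u, v}" for x
        proof -
          have xW: "x \<in> W" using that uW vW by blast
          have oth: "{u,v} \<inter> nb W x = {u,v} - {x}"
            using that vu Esym Eirr uv by (auto simp: nb_def uW vW)
          have "nb (W - {u,v}) x = nb W x - ({u,v} - {x})" using Eirr by (auto simp: nb_def)
          moreover have "card (nb W x - ({u,v} - {x})) = card (nb W x) - card ({u,v} - {x})"
          proof -
            have "{u,v} - {x} \<subseteq> nb W x" using oth by blast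
            then show ?thesis by (rule card_Diff_subset[rotated]) simp
          qed
          moreover have "card ({u,v} - {x}) = 1" using that uv by auto
          ultimately show ?thesis using d2[OF xW] by (simp add: dg_def)
        qed
        have "good W Z {u, v}" unfolding good_def
        proof (intro conjI ballI)
          show "{u, v} \<subseteq> W" using uW vW by blast
          show "connected_on E {u, v}" using conn_ins[OF conn_single[of E v], of v u] vu by (simp add: insert_commute)
          have "prs {u, v} {u, v} = {(u,v),(v,u)}" using vu Esym Eirr by (auto simp: prs_def)
          then show "card (prs {u, v} {u, v}) = 2 * (card {u, v} - 1)" using uv by simp
          fix x assume "x \<in> {u, v}"
          then show "ind Z x + int (card (nb (W - {u, v}) x)) = 1" using out1 ind0 uW vW by auto
        qed
        then show False using nog by blast
      qed
    qed
  qed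
qed

end



context sg begin

lemma prs_num_edges: "card (prs V V) = 2 * num_edges V E"
proof -
  define D where "D = {{u, v} | u v. u \<in> V \<and> v \<in> V \<and> E u v}"
  define B where "B = (\<lambda>e. {p \<in> prs V V. {fst p, snd p} = e})"
  have fP: "finite (prs V V)" using prs_fin by blast
  have DI: "D = (\<lambda>p. {fst p, snd p}) ` prs V V"
  proof
    show "D \<subseteq> (\<lambda>p. {fst p, snd p}) ` prs V V"
    proof
      fix e assume "e \<in> D"
      then obtain u v where "e = {u,v}" "u \<in> V" "v \<in> V" "E u v" by (auto simp: D_def)
      then show "e \<in> (\<lambda>p. {fst p, snd p}) ` prs V V"
        by (intro image_eqI[of _ _ "(u,v)"]) (auto simp: prs_def)
    qed
    show "(\<lambda>p. {fst p, snd p}) ` prs V V \<subseteq> D"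
    proof
      fix e assume "e \<in> (\<lambda>p. {fst p, snd p}) ` prs V V"
      then obtain x y where "e = {x,y}" "x \<in> V" "y \<in> V" "E x y" by (auto simp: prs_def)
      then show "e \<in> D" unfolding D_def by blast
    qed
  qed
  have fD: "finite D" using DI fP by simp
  have U: "prs V V = (\<Union>e\<in>D. B e)" by (auto simp: B_def DI)
  have c2: "card (B e) = 2" if eD: "e \<in> D" for e
  proof -
    obtain u v where e: "e = {u,v}" "u \<in> V" "v \<in> V" "E u v" using eD by (auto simp: D_def)
    have uv: "u \<noteq> v" using e Eirr by blast
    have "B e = {(u,v),(v,u)}"
      using e Esym uv by (auto simp: B_def prs_def doubleton_eq_iff)
    then show ?thesis using uv by simp
  qed
  have "card (\<Union>e\<in>D. B e) = (\<Sum>e\<in>D. card (B e))"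
    by (rule card_UN_disjoint) (use fD fP in \<open>auto simp: B_def\<close>)
  also have "\<dots> = 2 * card D" using c2 by simp
  finally show ?thesis using U by (simp add: num_edges_def D_def)
qed

end

theorem mainTheorem9:
  fixes V :: "'a set" and E :: "'a \<Rightarrow> 'a \<Rightarrow> bool"
  assumes "simple_graph V E"
    and "k_connected 2 V E"
    and "avg_degree V E < 3"
    and "card {v \<in> V. degree V E v = 2} \<ge> 2"
  shows "\<exists>T. T \<subseteq> V \<and> induced_tree E T \<and>
           (\<forall>v \<in> T. card {w \<in> V - T. E v w} = 1)"
proof -
  interpret sg V E using assms(1) by unfold_locales
  have fV: "finite V" by (rule finV)
  have n2: "card V > 2" using assms(2) by (simp add: k_connected_def)
  have degdg: "degree V E v = dg V v" for v by (simp add: degree_def dg_def nb_def)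
  have "2 * real (num_edges V E) / real (card V) < 3" using assms(3) by (simp add: avg_degree_def)
  then have "2 * real (num_edges V E) < 3 * real (card V)" using n2 by (simp add: divide_less_eq)
  then have ne: "2 * num_edges V E < 3 * card V" by linarith
  have sumdeg: "(\<Sum>v\<in>V. int (degree V E v)) = int (card (prs V V))"
    using sum_dg[of V V] degdg by (simp add: of_nat_sum[symmetric])
  have PhiV: "(\<Sum>v\<in>V. 3 - int (degree V E v)) \<ge> 1"
  proof -
    have "(\<Sum>v\<in>V. 3 - int (degree V E v)) = 3 * int (card V) - int (card (prs V V))"
      using sumdeg by (simp add: sum_subtractf)
    then show ?thesis using ne prs_num_edges by simp
  qed
  have Vne: "V \<noteq> {}" using n2 by auto
  define m where "m = Max (degree V E ` V)"
  have "m \<in> degree V E ` V" unfolding m_def using fV Vne by simp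
  then obtain v0 where v0: "v0 \<in> V" "degree V E v0 = m" by blast
  have mx: "degree V E v \<le> degree V E v0" if "v \<in> V" for v
    using that fV v0 unfolding m_def by simp
  define W where "W = V - {v0}"
  define Z where "Z = {w \<in> V. E v0 w}"
  have WV: "W \<subseteq> V" by (simp add: W_def)
  have fW: "finite W" using fV by (simp add: W_def)
  have cardW: "card W = card V - 1" using v0 fV by (simp add: W_def)
  have allX: "\<forall>X. X \<subseteq> V \<and> card X < 2 \<longrightarrow> connected_on E (V - X)"
    using assms(2) by (simp add: k_connected_def)
  have cW: "connected_on E W"
    using allX[rule_format, of "{v0}"] v0 unfolding W_def by simp
  have inst: "inst W Z" using WV cW cardW n2 unfolding inst_def by auto
  have nb0: "nb {v0} v = (if E v v0 then {v0} else {})" for v by (auto simp: nb_def)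
  have ind0: "ind Z v = (if E v v0 then 1 else 0)" if "v \<in> V" for v
    using that Esym v0 by (auto simp: ind_def Z_def)
  have dgW: "int (dg W v) + ind Z v = int (degree V E v)" if vW: "v \<in> W" for v
  proof -
    have "nb V v = nb W v \<union> nb {v0} v" using v0 by (auto simp: nb_def W_def)
    moreover have "card (nb W v \<union> nb {v0} v) = card (nb W v) + card (nb {v0} v)"
      by (rule card_Un_disjoint) (use fW in \<open>auto simp: nb_def W_def\<close>)
    moreover have "int (card (nb {v0} v)) = ind Z v"
      using vW WV nb0[of v] ind0[of v] by auto
    ultimately show ?thesis by (simp add: degdg dg_def)
  qed
  have phiW: "phi W Z W = (\<Sum>v\<in>W. 3 - int (degree V E v))"
    unfolding phi_def using dgW by (intro sum.cong) (auto simp: algebra_simps)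
  have splitV: "(\<Sum>v\<in>V. 3 - int (degree V E v)) = (3 - int (degree V E v0)) + (\<Sum>v\<in>W. 3 - int (degree V E v))"
    unfolding W_def by (rule sum.remove[OF fV v0(1)])
  have ph: "phi W Z W \<ge> 2"
  proof (cases "degree V E v0 \<ge> 4")
    case True then show ?thesis using PhiV splitV phiW by simp
  next
    case False
    then have le3: "degree V E v \<le> 3" if "v \<in> V" for v using mx[OF that] by simp
    define D' where "D' = {v \<in> W. degree V E v \<le> 2}"
    have "(\<Sum>v\<in>W. 3 - int (degree V E v)) \<ge> (\<Sum>v\<in>W. if v \<in> D' then 1 else 0)"
      by (rule sum_mono) (use le3 WV in \<open>auto simp: D'_def\<close>)
    also have "(\<Sum>v\<in>W. if v \<in> D' then 1 else 0) = int (card D')"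
      using fW by (simp add: sum.If_cases D'_def Int_def)
    finally have sge: "(\<Sum>v\<in>W. 3 - int (degree V E v)) \<ge> int (card D')" .
    have "card D' \<ge> 2"
    proof (cases "degree V E v0 = 3")
      case True
      then have "{v \<in> V. degree V E v = 2} \<subseteq> D'" by (auto simp: D'_def W_def)
      moreover have "finite D'" using fW by (simp add: D'_def)
      ultimately have "card {v \<in> V. degree V E v = 2} \<le> card D'" by (intro card_mono)
      then show ?thesis using assms(4) by linarith
    next
      case False
      then have "degree V E v0 \<le> 2" using le3 v0 by force
      then have "D' = W" using mx WV unfolding D'_def using le_trans by blast
      then show ?thesis using cardW n2 by simp
    qed
    then show ?thesis using sge phiW by simp
  qed
  obtain T where gT: "good W Z T" using K[OF inst] ph by blast
  have TW: "T \<subseteq> W" and cT: "connected_on E T" and cnt: "card (prs T T) = 2 * (card T - 1)"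
    and outs: "\<And>v. v \<in> T \<Longrightarrow> ind Z v + int (card (nb (W - T) v)) = 1"
    using gT by (auto simp: good_def)
  have TV: "T \<subseteq> V" using TW WV by blast
  have fT: "finite T" using TV fV finite_subset by blast
  have nocyc: "\<not> has_cycle_on E T"
  proof
    assume "has_cycle_on E T"
    then show False using tree_nocycle[of E T] Esym fT cT cnt prs_prsF by simp
  qed
  have "\<forall>v\<in>T. card {w \<in> V - T. E v w} = 1"
  proof
    fix v assume vT: "v \<in> T"
    have v0T: "v0 \<notin> T" using TW by (auto simp: W_def)
    have "{w \<in> V - T. E v w} = nb (W - T) v \<union> nb {v0} v" using v0 v0T by (auto simp: nb_def W_def)
    moreover have "card (nb (W - T) v \<union> nb {v0} v) = card (nb (W - T) v) + card (nb {v0} v)"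
      by (rule card_Un_disjoint) (use fW in \<open>auto simp: nb_def W_def\<close>)
    moreover have "int (card (nb {v0} v)) = ind Z v"
      using vT TV nb0[of v] ind0[of v] by auto
    ultimately show "card {w \<in> V - T. E v w} = 1" using outs[OF vT] by simp
  qed
  then show ?thesis using TV cT nocyc by (auto simp: induced_tree_def)
qed


end
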